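(* Consider a two-asset G3M with weight $w\in(0,1)$ and fee parameter $\gamma\in(0,1)$, reserves $x_t,y_t>0$ and pool price $P_t=\frac{w}{1-w}\frac{y_t}{x_t}$, in which reserves change by continuous trades obeying $w\,\frac{dx}{x}+\gamma(1-w)\frac{dy}{y}=0$ when $dx<0$ (buying $X$ from the pool) and $\gamma w\frac{dx}{x}+(1-w)\frac{dy}{y}=0$ when $dx>0$ (selling $X$ to the pool). Let the reference price $S_t$ be continuous with $\gamma P_0\le S_0\le\gamma^{-1}P_0$, assume no noise traders, a frictionless reference market and continuous instantaneous arbitrage, and write $\ln P_t=\ln P_0+U_t-L_t$ and $Z_t=\ln(S_t/P_t)=\ln S_t-\ln P_0+L_t-U_t\in[\ln\gamma,-\ln\gamma]$, where $L_t,U_t$ are continuous non-decreasing with $L_0=U_0=0$, $L$ increasing only when $Z_t=\ln\gamma$ and $U$ only when $Z_t=-\ln\gamma$. Then: (a) $x_t$ and $y_t$ are predictable processes; (b) $x_t$ increases only when $Z_t=\ln\gamma$ and decreases only when $Z_t=-\ln\gamma$; $y_t$ increases only when $Z_t=-\ln\gamma$ and decreases only when $Z_t=\ln\gamma$; (c) $\ln x_t$ and $\ln y_t$ are continuous and of bounded variation on bounded subintervals of $[0,\infty)$; (d) $$d\ln x_t=\frac{1-w}{1-w+\gamma w}\,dL_t-\frac{\gamma(1-w)}{\gamma(1-w)+w}\,dU_t,\qquad d\ln y_t=\frac{w}{\gamma(1-w)+w}\,dU_t-\frac{\gamma w}{1-w+\gamma w}\,dL_t.$$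
   Context: $L_t$ (resp. $U_t$) is the cumulative decrease (resp. increase) of $\ln P_t$ due to arbitrage sales of $X$ to (resp. purchases of $X$ from) the pool. Time $t$ is a point of increase (decrease) of $x$ if there is $\delta>0$ with $x_{t-\delta_1}<x_{t+\delta_2}$ (resp. $>$) for all $\delta_1,\delta_2\in(0,\delta]$; $x$ "increases only when $Z_t=a$" if $Z_t=a$ at every point of increase. *)

theory Defs
  imports "HOL-Analysis.Analysis" "HOL-Probability.Probability"
begin

definition point_of_increase :: "(real \<Rightarrow> real) \<Rightarrow> real \<Rightarrow> bool" where
  "point_of_increase f t \<longleftrightarrow>
     (\<exists>d>0. \<forall>d1 d2. 0 < d1 \<and> d1 \<le> d \<and> 0 < d2 \<and> d2 \<le> d \<longrightarrow> f (t - d1) < f (t + d2))"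

definition point_of_decrease :: "(real \<Rightarrow> real) \<Rightarrow> real \<Rightarrow> bool" where
  "point_of_decrease f t \<longleftrightarrow>
     (\<exists>d>0. \<forall>d1 d2. 0 < d1 \<and> d1 \<le> d \<and> 0 < d2 \<and> d2 \<le> d \<longrightarrow> f (t - d1) > f (t + d2))"

definition increases_only_when :: "(real \<Rightarrow> real) \<Rightarrow> (real \<Rightarrow> real) \<Rightarrow> real \<Rightarrow> bool" where
  "increases_only_when f Z a \<longleftrightarrow> (\<forall>t>0. point_of_increase f t \<longrightarrow> Z t = a)"

definition decreases_only_when :: "(real \<Rightarrow> real) \<Rightarrow> (real \<Rightarrow> real) \<Rightarrow> real \<Rightarrow> bool" where
  "decreases_only_when f Z a \<longleftrightarrow> (\<forall>t>0. point_of_decrease f t \<longrightarrow> Z t = a)"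

definition bounded_variation_on :: "(real \<Rightarrow> real) \<Rightarrow> real \<Rightarrow> real \<Rightarrow> bool" where
  "bounded_variation_on f a b \<longleftrightarrow>
     (\<exists>B. \<forall>(n::nat) (p::nat \<Rightarrow> real).
        (\<forall>i<n. a \<le> p i \<and> p i \<le> p (Suc i) \<and> p (Suc i) \<le> b) \<longrightarrow>
        (\<Sum>i<n. \<bar>f (p (Suc i)) - f (p i)\<bar>) \<le> B)"

definition predictable_sigma :: "(real \<Rightarrow> 'a measure) \<Rightarrow> 'a set \<Rightarrow> (real \<times> 'a) measure" where
  "predictable_sigma F \<Omega> = sigma ({0..} \<times> \<Omega>)
     ({{0} \<times> A | A. A \<in> sets (F 0)} \<union>
      {{s<..t} \<times> A | s t A. 0 \<le> s \<and> s \<le> t \<and> A \<in> sets (F s)})"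

definition predictable :: "(real \<Rightarrow> 'a measure) \<Rightarrow> 'a set \<Rightarrow> (real \<Rightarrow> 'a \<Rightarrow> real) \<Rightarrow> bool" where
  "predictable F \<Omega> X \<longleftrightarrow> (\<lambda>(t, \<omega>). X t \<omega>) \<in> borel_measurable (predictable_sigma F \<Omega>)"

end

theory Submission
  imports Defs
begin

lemma cont_bounded_Icc:
  fixes f :: "real \<Rightarrow> real"
  assumes "continuous_on {s..t} f"
  shows "\<exists>B. \<forall>u\<in>{s..t}. \<bar>f u\<bar> \<le> B"
proof -
  have "compact (f ` {s..t})" using compact_continuous_image[OF assms] by simp
  then have "bounded (f ` {s..t})" by (rule compact_imp_bounded)
  then show ?thesis unfolding bounded_iff by auto
qed

lemma const_lemma:
  fixes f :: "real \<Rightarrow> real"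
  assumes st: "s \<le> t" and cont: "continuous_on {s..t} f" and mono: "mono_on {s..t} f"
    and noinc: "\<And>u. s < u \<Longrightarrow> u < t \<Longrightarrow> \<not> point_of_increase f u"
  shows "f t = f s"
proof (rule ccontr)
  assume ne: "f t \<noteq> f s"
  have "f s \<le> f t" using mono st by (auto intro: mono_onD)
  with ne have lt: "f s < f t" by simp
  define c where "c = (f s + f t) / 2"
  have c1: "f s < c" "c < f t" using lt by (auto simp: c_def)
  define K where "K = {s..t} \<inter> f -` {..c}"
  have Kcl: "closed K" unfolding K_def
    by (rule continuous_closed_preimage[OF cont]) auto
  have sK: "s \<in> K" using st c1 by (auto simp: K_def)
  have Kbdd: "bdd_above K" unfolding K_def by (auto intro: bdd_aboveI[of _ t])
  define \<tau> where "\<tau> = Sup K"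
  have tK: "\<tau> \<in> K" unfolding \<tau>_def using closed_contains_Sup[OF _ Kbdd Kcl] sK by auto
  have above: "u \<in> K \<Longrightarrow> u \<le> \<tau>" for u unfolding \<tau>_def using Kbdd cSup_upper by blast
  obtain u where u: "s \<le> u" "u \<le> t" "f u = c"
    using IVT'[of f s c t] c1 st cont by auto
  have "u \<in> K" using u by (auto simp: K_def)
  then have "u \<le> \<tau>" by (rule above)
  moreover have "u \<noteq> s" using u c1 by auto
  ultimately have ts: "s < \<tau>" using u by auto
  have ftau: "f \<tau> \<le> c" "\<tau> \<le> t" using tK by (auto simp: K_def)
  have tt: "\<tau> < t" using ftau c1 by (cases "\<tau> = t") auto
  have "point_of_increase f \<tau>"
    unfolding point_of_increase_def
  proof (intro exI[of _ "min (\<tau> - s) (t - \<tau>)"] conjI allI impI)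
    show "0 < min (\<tau> - s) (t - \<tau>)" using ts tt by auto
    fix d1 d2 assume d: "0 < d1 \<and> d1 \<le> min (\<tau> - s) (t - \<tau>) \<and> 0 < d2 \<and> d2 \<le> min (\<tau> - s) (t - \<tau>)"
    have "f (\<tau> - d1) \<le> f \<tau>" using d ts tt by (intro mono_onD[OF mono]) auto
    moreover have "\<tau> + d2 \<notin> K" using above[of "\<tau> + d2"] d by auto
    then have "c < f (\<tau> + d2)" using d ts tt by (auto simp: K_def)
    ultimately show "f (\<tau> - d1) < f (\<tau> + d2)" using ftau by auto
  qed
  with noinc ts tt show False by auto
qed

lemma last_hit:
  fixes Z :: "real \<Rightarrow> real"
  assumes cont: "continuous_on {s..t} Z" and H: "{u\<in>{s..t}. Z u = c} \<noteq> {}"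
  obtains v where "s \<le> v" "v \<le> t" "Z v = c" "\<And>u. v < u \<Longrightarrow> u \<le> t \<Longrightarrow> Z u \<noteq> c"
proof -
  define K where "K = {s..t} \<inter> Z -` {c}"
  have Kcl: "closed K" unfolding K_def
    by (rule continuous_closed_preimage[OF cont]) auto
  have Kbdd: "bdd_above K" unfolding K_def by (auto intro: bdd_aboveI[of _ t])
  have ne: "K \<noteq> {}" using H by (auto simp: K_def)
  have vK: "Sup K \<in> K" using closed_contains_Sup[OF ne Kbdd Kcl] .
  have above: "u \<in> K \<Longrightarrow> u \<le> Sup K" for u using Kbdd cSup_upper by blast
  show ?thesis
  proof (rule that[of "Sup K"])
    show "s \<le> Sup K" "Sup K \<le> t" "Z (Sup K) = c" using vK by (auto simp: K_def)
    fix u assume "Sup K < u" "u \<le> t"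
    moreover have "s \<le> u" using \<open>s \<le> Sup K\<close> \<open>Sup K < u\<close> by simp
    ultimately show "Z u \<noteq> c" using above[of u] by (auto simp: K_def)
  qed
qed

definition clamp :: "real \<Rightarrow> real \<Rightarrow> real \<Rightarrow> real" where
  "clamp s t q = max s (min t q)"

lemma clamp_in: "s \<le> t \<Longrightarrow> clamp s t q \<in> {s..t}"
  by (auto simp: clamp_def)

lemma INFQ:
  fixes \<phi> :: "real \<Rightarrow> real"
  assumes st: "s \<le> t" and cont: "continuous_on {s..t} \<phi>"
  shows "(INF q\<in>\<rat>. \<phi> (clamp s t q)) = Inf (\<phi> ` {s..t})"
    and "bdd_below ((\<lambda>q. \<phi> (clamp s t q)) ` \<rat>)"
proof -
  obtain B where B: "\<And>u. u \<in> {s..t} \<Longrightarrow> \<bar>\<phi> u\<bar> \<le> B" using cont_bounded_Icc[OF cont] by blast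
  show bddQ: "bdd_below ((\<lambda>q. \<phi> (clamp s t q)) ` \<rat>)"
  proof (rule bdd_belowI[of _ "-B"])
    fix x assume "x \<in> (\<lambda>q. \<phi> (clamp s t q)) ` \<rat>"
    then obtain q where "x = \<phi> (clamp s t q)" by auto
    then show "- B \<le> x" using B[OF clamp_in[OF st, of q]] by auto
  qed
  obtain u where u: "u \<in> {s..t}" "\<And>y. y \<in> {s..t} \<Longrightarrow> \<phi> u \<le> \<phi> y"
    using continuous_attains_inf[OF compact_Icc _ cont] st by auto
  have Iu: "Inf (\<phi> ` {s..t}) = \<phi> u"
    using u by (intro cInf_eq_minimum) auto
  have ge: "Inf (\<phi> ` {s..t}) \<le> (INF q\<in>\<rat>. \<phi> (clamp s t q))"
    using Iu u clamp_in[OF st] by (intro cINF_greatest) (auto simp: Rats_eq_range_nat_to_rat_surj)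
  have le: "(INF q\<in>\<rat>. \<phi> (clamp s t q)) \<le> \<phi> u + e" if e: "e > 0" for e
  proof -
    from cont u(1) e obtain d where d: "d > 0" "\<And>y. y \<in> {s..t} \<Longrightarrow> dist y u < d \<Longrightarrow> dist (\<phi> y) (\<phi> u) < e"
      unfolding continuous_on_iff by metis
    obtain q where q: "q \<in> \<rat>" "u < q" "q < u + d" using Rats_dense_in_real[of u "u + d"] d by auto
    have "clamp s t q \<in> {s..t}" using clamp_in[OF st] .
    moreover have "dist (clamp s t q) u < d" using q u(1) d by (auto simp: clamp_def dist_real_def)
    ultimately have "dist (\<phi> (clamp s t q)) (\<phi> u) < e" using d(2) by blast
    then have "\<phi> (clamp s t q) < \<phi> u + e" by (auto simp: dist_real_def)
    moreover have "(INF q\<in>\<rat>. \<phi> (clamp s t q)) \<le> \<phi> (clamp s t q)"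
      by (rule cINF_lower[OF bddQ q(1)])
    ultimately show ?thesis by simp
  qed
  have "(INF q\<in>\<rat>. \<phi> (clamp s t q)) \<le> \<phi> u"
    by (rule field_le_epsilon) (use le in auto)
  then show "(INF q\<in>\<rat>. \<phi> (clamp s t q)) = Inf (\<phi> ` {s..t})" using ge Iu by simp
qed

lemma bdd_below_img:
  fixes \<phi> :: "real \<Rightarrow> real"
  assumes "continuous_on {s..t} \<phi>"
  shows "bdd_below (\<phi> ` {s..t})"
proof -
  obtain B where B: "\<And>u. u \<in> {s..t} \<Longrightarrow> \<bar>\<phi> u\<bar> \<le> B" using cont_bounded_Icc[OF assms] by blast
  show ?thesis
  proof (rule bdd_belowI[of _ "-B"])
    fix x assume "x \<in> \<phi> ` {s..t}"
    then obtain u where "u \<in> {s..t}" "x = \<phi> u" by auto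
    then show "- B \<le> x" using B[of u] by auto
  qed
qed

locale skor =
  fixes X L U :: "real \<Rightarrow> real" and a b :: real
  assumes ab: "a < b"
    and X_cont: "continuous_on {0..} X"
    and L_cont: "continuous_on {0..} L" and U_cont: "continuous_on {0..} U"
    and L_mono: "mono_on {0..} L" and U_mono: "mono_on {0..} U"
    and L0: "L 0 = 0" and U0: "U 0 = 0"
    and band: "\<And>t. 0 \<le> t \<Longrightarrow> a \<le> X t + L t - U t \<and> X t + L t - U t \<le> b"
    and L_inc: "\<And>t. 0 < t \<Longrightarrow> point_of_increase L t \<Longrightarrow> X t + L t - U t = a"
    and U_inc: "\<And>t. 0 < t \<Longrightarrow> point_of_increase U t \<Longrightarrow> X t + L t - U t = b"
begin

definition Z where "Z t = X t + L t - U t"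

lemma Z_cont: "continuous_on {0..} Z"
  unfolding Z_def[abs_def] by (intro continuous_on_diff continuous_on_add X_cont L_cont U_cont)

lemma sub_cont: "0 \<le> (s::real) \<Longrightarrow> continuous_on {0..} f \<Longrightarrow> continuous_on {s..t} f"
  by (rule continuous_on_subset) (auto intro: order_trans)

lemma sub_mono: "0 \<le> (s::real) \<Longrightarrow> mono_on {0..} f \<Longrightarrow> mono_on {s..t} f"
  by (rule mono_on_subset) (auto intro: order_trans)

lemma Lm: "0 \<le> s \<Longrightarrow> s \<le> t \<Longrightarrow> L s \<le> L t"
  using L_mono by (auto intro: mono_onD)
lemma Um: "0 \<le> s \<Longrightarrow> s \<le> t \<Longrightarrow> U s \<le> U t"
  using U_mono by (auto intro: mono_onD)

lemma Lconst:
  assumes "0 \<le> s" "s \<le> t" "\<And>u. s < u \<Longrightarrow> u < t \<Longrightarrow> Z u \<noteq> a"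
  shows "L t = L s"
proof (rule const_lemma[OF assms(2) sub_cont[OF assms(1) L_cont] sub_mono[OF assms(1) L_mono]])
  fix u assume u: "s < u" "u < t"
  show "\<not> point_of_increase L u"
    using L_inc[of u] assms(1) assms(3)[OF u] u by (auto simp: Z_def)
qed

lemma Uconst:
  assumes "0 \<le> s" "s \<le> t" "\<And>u. s < u \<Longrightarrow> u < t \<Longrightarrow> Z u \<noteq> b"
  shows "U t = U s"
proof (rule const_lemma[OF assms(2) sub_cont[OF assms(1) U_cont] sub_mono[OF assms(1) U_mono]])
  fix u assume u: "s < u" "u < t"
  show "\<not> point_of_increase U u"
    using U_inc[of u] assms(1) assms(3)[OF u] u by (auto simp: Z_def)
qed

definition Ib where "Ib s t = Inf ((\<lambda>u. b - X u) ` {s..t})"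

lemma Ib_lower: "0 \<le> s \<Longrightarrow> u \<in> {s..t} \<Longrightarrow> Ib s t \<le> b - X u"
  unfolding Ib_def
  by (rule cInf_lower) (auto intro!: bdd_below_img continuous_on_diff continuous_on_const sub_cont X_cont)

lemma Ib_greatest: "s \<le> t \<Longrightarrow> (\<And>u. u \<in> {s..t} \<Longrightarrow> c \<le> b - X u) \<Longrightarrow> c \<le> Ib s t"
  unfolding Ib_def by (rule cInf_greatest) auto

lemma LB:
  assumes s: "0 \<le> s" "s \<le> t"
  shows "min (L s - U s) (Ib s t) \<le> L t - U t"
proof (cases "{u\<in>{s..t}. Z u = b} = {}")
  case True
  have "U t = U s" using s True by (intro Uconst) auto
  then show ?thesis using Lm[OF s] by simp
next
  case False
  obtain v where v: "s \<le> v" "v \<le> t" "Z v = b" "\<And>u. v < u \<Longrightarrow> u \<le> t \<Longrightarrow> Z u \<noteq> b"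
    using last_hit[OF sub_cont[OF s(1) Z_cont] False] by blast
  have "U t = U v" using v s by (intro Uconst) auto
  moreover have "L v \<le> L t" using v s by (intro Lm) auto
  moreover have "Ib s t \<le> b - X v" using v s by (intro Ib_lower) auto
  ultimately show ?thesis using v(3) by (auto simp: Z_def)
qed

lemma term_le:
  assumes t: "0 \<le> t"
  shows "min (a - X (clamp 0 t q)) (Ib (clamp 0 t q) t) \<le> L t - U t"
proof -
  define s where "s = clamp 0 t q"
  have s: "0 \<le> s" "s \<le> t" using clamp_in[OF t] by (auto simp: s_def)
  have "a - X s \<le> L s - U s" using band[OF s(1)] by simp
  then show ?thesis using LB[OF s] unfolding s_def[symmetric] by linarith
qed

lemma term0_le:
  assumes t: "0 \<le> t"
  shows "min 0 (Ib 0 t) \<le> L t - U t"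
  using LB[of 0 t] t L0 U0 by simp

lemma bddQ: "0 \<le> t \<Longrightarrow> bdd_above ((\<lambda>q. min (a - X (clamp 0 t q)) (Ib (clamp 0 t q) t)) ` \<rat>)"
  using term_le by (auto intro!: bdd_aboveI)

lemma Nform:
  assumes t: "0 \<le> t"
  shows "L t - U t = max (min 0 (Ib 0 t)) (SUP q\<in>\<rat>. min (a - X (clamp 0 t q)) (Ib (clamp 0 t q) t))"
proof -
  have ne: "\<rat> \<noteq> {}" using Rats_0 by blast
  have sup_le: "(SUP q\<in>\<rat>. min (a - X (clamp 0 t q)) (Ib (clamp 0 t q) t)) \<le> L t - U t"
    using term_le[OF t] ne by (intro cSUP_least) auto
  have "L t - U t \<le> max (min 0 (Ib 0 t)) (SUP q\<in>\<rat>. min (a - X (clamp 0 t q)) (Ib (clamp 0 t q) t))"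
  proof (cases "{u\<in>{0..t}. Z u = a} = {}")
    case True
    have Lt: "L t = 0" using True t L0 by (subst Lconst) auto
    have "L t - U t \<le> Ib 0 t"
    proof (rule Ib_greatest[OF t])
      fix u assume u: "u \<in> {0..t}"
      have "L u = 0" using Lm[of 0 u] Lm[of u t] u L0 Lt by auto
      moreover have "U u \<le> U t" using u by (intro Um) auto
      moreover have "X u + L u - U u \<le> b" using band[of u] u by auto
      ultimately show "L t - U t \<le> b - X u" using Lt by linarith
    qed
    moreover have "L t - U t \<le> 0" using Lt Um[of 0 t] U0 t by auto
    ultimately show ?thesis by auto
  next
    case False
    obtain r where r: "0 \<le> r" "r \<le> t" "Z r = a" "\<And>u. r < u \<Longrightarrow> u \<le> t \<Longrightarrow> Z u \<noteq> a"
      using last_hit[OF sub_cont[OF _ Z_cont] False] by blast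
    have Lr: "L u = L r" if "u \<in> {r..t}" for u
      using that r by (intro Lconst) auto
    have Nu: "L t - U t \<le> L u - U u" if "u \<in> {r..t}" for u
      using Lr[OF that] Lr[of t] r Um[of u t] that by auto
    have Ibr: "L t - U t \<le> Ib s t" if "r \<le> s" "s \<le> t" for s
    proof (rule Ib_greatest[OF that(2)])
      fix u assume u: "u \<in> {s..t}"
      have "X u + L u - U u \<le> b" using band[of u] u r that by auto
      then show "L t - U t \<le> b - X u" using Nu[of u] u that by auto
    qed
    have Nr: "a - X r = L r - U r" using r(3) by (simp add: Z_def)
    have "L t - U t \<le> (SUP q\<in>\<rat>. min (a - X (clamp 0 t q)) (Ib (clamp 0 t q) t))"
    proof (rule field_le_epsilon)
      fix e :: real assume e: "0 < e"
      from X_cont r(1) e obtain d where d: "d > 0" "\<And>y. y \<in> {0..} \<Longrightarrow> dist y r < d \<Longrightarrow> dist (X y) (X r) < e"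
        unfolding continuous_on_iff by (metis atLeast_iff)
      obtain q where q: "q \<in> \<rat>" "r < q" "q < r + d" using Rats_dense_in_real[of r "r + d"] d by auto
      define s where "s = clamp 0 t q"
      have s: "s = min t q" using q r by (auto simp: s_def clamp_def)
      have s2: "r \<le> s" "s \<le> t" "0 \<le> s" using s q r by auto
      have "dist (X s) (X r) < e" using d(2)[of s] s2 s q r by (auto simp: dist_real_def)
      then have "a - X s \<ge> a - X r - e" by (auto simp: dist_real_def)
      moreover have "a - X r \<ge> L t - U t" using Nr Nu[of r] r by auto
      ultimately have "min (a - X s) (Ib s t) \<ge> L t - U t - e" using Ibr[OF s2(1,2)] e by auto
      moreover have "min (a - X s) (Ib s t) \<le> (SUP q\<in>\<rat>. min (a - X (clamp 0 t q)) (Ib (clamp 0 t q) t))"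
        unfolding s_def by (rule cSUP_upper[OF q(1) bddQ[OF t]])
      ultimately show "L t - U t \<le> (SUP q\<in>\<rat>. min (a - X (clamp 0 t q)) (Ib (clamp 0 t q) t)) + e"
        by linarith
    qed
    then show ?thesis by auto
  qed
  moreover have "min 0 (Ib 0 t) \<le> L t - U t" by (rule term0_le[OF t])
  ultimately show ?thesis using sup_le by linarith
qed

lemma piece:
  assumes s: "0 \<le> s" "s \<le> u"
    and close: "\<And>v w. v \<in> {s..u} \<Longrightarrow> w \<in> {s..u} \<Longrightarrow> \<bar>Z v - Z w\<bar> < b - a"
  shows "max 0 ((L u - U u) - (L s - U s)) = L u - L s"
proof (cases "\<exists>v. s < v \<and> v < u \<and> Z v = a")
  case True
  then obtain v where v: "s < v" "v < u" "Z v = a" by blast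
  have "U u = U s"
  proof (rule Uconst[OF s])
    fix w assume w: "s < w" "w < u"
    have "\<bar>Z w - Z v\<bar> < b - a" using close[of w v] w v by auto
    then show "Z w \<noteq> b" using v by auto
  qed
  then show ?thesis using Lm[OF s] by simp
next
  case False
  have "L u = L s" using False s by (intro Lconst) auto
  then show ?thesis using Um[OF s] by simp
qed

lemma Lform:
  assumes t: "0 \<le> t"
  shows "(\<lambda>n. \<Sum>i<n. max 0 ((L (t * real (Suc i) / real n) - U (t * real (Suc i) / real n))
                 - (L (t * real i / real n) - U (t * real i / real n)))) \<longlonglongrightarrow> L t"
proof (rule tendsto_eventually)
  have "uniformly_continuous_on {0..t} Z"
    by (rule compact_uniformly_continuous[OF sub_cont[OF order_refl Z_cont] compact_Icc])
  then obtain d where d: "d > 0" "\<And>v w. v \<in> {0..t} \<Longrightarrow> w \<in> {0..t} \<Longrightarrow> dist w v < d \<Longrightarrow> dist (Z w) (Z v) < b - a"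
    unfolding uniformly_continuous_on_def using ab by (metis diff_gt_0_iff_gt)
  obtain n0 :: nat where n0: "t / d < real n0" using reals_Archimedean2 by blast
  show "\<forall>\<^sub>F n in sequentially. (\<Sum>i<n. max 0 ((L (t * real (Suc i) / real n) - U (t * real (Suc i) / real n))
                 - (L (t * real i / real n) - U (t * real i / real n)))) = L t"
    unfolding eventually_sequentially
  proof (intro exI[of _ "Suc n0"] allI impI)
    fix n assume n: "Suc n0 \<le> n"
    then have npos: "real n > 0" by auto
    have tn: "t / real n < d"
    proof -
      have "t / d < real n" using n0 n by auto
      then have "t < real n * d" using d by (simp add: divide_less_eq mult.commute)
      then show ?thesis using npos by (simp add: divide_less_eq mult.commute)
    qed
    define p where "p i = t * real i / real n" for i
    have p_mono: "p i \<le> p j" if "i \<le> j" for i j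
      unfolding p_def using that t npos by (intro divide_right_mono mult_left_mono) auto
    have p_range: "0 \<le> p i \<and> p i \<le> t" if "i \<le> n" for i
      unfolding p_def using that t npos by (auto simp: divide_le_eq intro: mult_left_mono)
    have p_step: "p (Suc i) - p i = t / real n" for i
      unfolding p_def by (simp add: add_divide_distrib distrib_left)
    have each: "max 0 ((L (p (Suc i)) - U (p (Suc i))) - (L (p i) - U (p i))) = L (p (Suc i)) - L (p i)"
      if i: "i < n" for i
    proof (rule piece)
      show "0 \<le> p i" using p_range[of i] i by auto
      show "p i \<le> p (Suc i)" by (rule p_mono) auto
      fix v w assume v: "v \<in> {p i..p (Suc i)}" and w: "w \<in> {p i..p (Suc i)}"
      have r1: "0 \<le> p i" "p (Suc i) \<le> t" using p_range[of i] p_range[of "Suc i"] i by auto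
      have "dist w v < d" using v w p_step[of i] tn by (auto simp: dist_real_def)
      then have "dist (Z w) (Z v) < b - a" using d(2)[of v w] v w r1 by auto
      then show "\<bar>Z v - Z w\<bar> < b - a" by (auto simp: dist_real_def)
    qed
    have "(\<Sum>i<n. max 0 ((L (p (Suc i)) - U (p (Suc i))) - (L (p i) - U (p i))))
        = (\<Sum>i<n. L (p (Suc i)) - L (p i))" using each by (intro sum.cong) auto
    also have "\<dots> = L (p n) - L (p 0)" by (rule sum_lessThan_telescope)
    also have "\<dots> = L t" using npos L0 by (simp add: p_def)
    finally show "(\<Sum>i<n. max 0 ((L (t * real (Suc i) / real n) - U (t * real (Suc i) / real n))
                 - (L (t * real i / real n) - U (t * real i / real n)))) = L t"
      by (simp add: p_def)
  qed
qed

end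


lemma ceil_grid:
  fixes t :: real and m :: nat
  assumes m: "0 < m" and t: "0 < t"
  shows "\<exists>k::nat. real k / m < t \<and> t \<le> real (Suc k) / m"
proof -
  define k where "k = nat (\<lceil>real m * t\<rceil> - 1)"
  have c1: "\<lceil>real m * t\<rceil> \<ge> 1" using m t by (simp add: one_le_ceiling)  
  then have kk: "real k = of_int \<lceil>real m * t\<rceil> - 1" by (simp add: k_def)
  have "of_int \<lceil>real m * t\<rceil> - 1 < real m * t" "real m * t \<le> of_int \<lceil>real m * t\<rceil>"
    by (auto simp: ceiling_correct)
  then show ?thesis using m kk
    by (intro exI[of _ k]) (auto simp: divide_simps mult.commute)
qed

lemma grid_val:
  fixes t :: real and m :: nat
  assumes m: "0 < m" and k: "real k / m < t" "t \<le> real (Suc k) / m"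
  shows "max 0 ((of_int \<lceil>real m * t\<rceil> - 1) / real m) = real k / real m"
proof -
  have "real k < real m * t" "real m * t \<le> real k + 1" using k m by (auto simp: divide_simps mult.commute)
  then have "\<lceil>real m * t\<rceil> = int k + 1" by (subst ceiling_eq_iff) auto
  then show ?thesis by auto
qed

lemma grid_zero:
  fixes m :: nat
  assumes m: "0 < m"
  shows "max 0 ((of_int \<lceil>real m * 0\<rceil> - 1) / real m) = 0"
  using m by simp

lemma predictable_cont_adapted:
  fixes X :: "real \<Rightarrow> 'a \<Rightarrow> real"
  assumes F: "filtration \<Omega> F"
    and cont: "\<And>\<omega>. \<omega> \<in> \<Omega> \<Longrightarrow> continuous_on {0..} (\<lambda>t. X t \<omega>)"
    and adapt: "\<And>t. 0 \<le> t \<Longrightarrow> X t \<in> borel_measurable (F t)"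
  shows "predictable F \<Omega> X"
proof -
  define G where "G = {{0} \<times> A | A. A \<in> sets (F 0)} \<union>
      {{s<..t} \<times> A | s t A. 0 \<le> s \<and> s \<le> t \<and> A \<in> sets (F s)}"
  have spF: "\<And>t. space (F t) = \<Omega>" using F by (simp add: filtration.space_F)
  have setsF: "A \<in> sets (F s) \<Longrightarrow> A \<subseteq> \<Omega>" for A s using sets.sets_into_space[of A "F s"] spF by auto
  have Gsub: "G \<subseteq> Pow ({0..} \<times> \<Omega>)" unfolding G_def using setsF by fastforce
  have PS: "predictable_sigma F \<Omega> = sigma ({0..} \<times> \<Omega>) G" unfolding predictable_sigma_def G_def by simp
  have sp: "space (predictable_sigma F \<Omega>) = {0..} \<times> \<Omega>" unfolding PS using Gsub by (rule space_measure_of)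
  have sets: "sets (predictable_sigma F \<Omega>) = sigma_sets ({0..} \<times> \<Omega>) G" unfolding PS using Gsub by (rule sets_measure_of)
  have lev: "{\<omega>\<in>\<Omega>. X r \<omega> \<le> c} \<in> sets (F r)" if "0 \<le> r" for r c
    using adapt[OF that] spF[of r] unfolding borel_measurable_iff_le by metis
  define Y where "Y n = (\<lambda>(t, \<omega>). X (max 0 ((of_int \<lceil>real (Suc n) * t\<rceil> - 1) / real (Suc n))) \<omega>)" for n
  have Ymeas: "Y n \<in> borel_measurable (predictable_sigma F \<Omega>)" for n
    unfolding borel_measurable_iff_le
  proof
    fix c
    define m where "m = Suc n"
    have m: "0 < m" by (simp add: m_def)
    have eq: "{p \<in> space (predictable_sigma F \<Omega>). Y n p \<le> c} =
      ({0} \<times> {\<omega>\<in>\<Omega>. X 0 \<omega> \<le> c}) \<union> (\<Union>k. {real k / m<..real (Suc k) / m} \<times> {\<omega>\<in>\<Omega>. X (real k / m) \<omega> \<le> c})"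
    proof (intro set_eqI iffI)
      fix p assume p: "p \<in> {p \<in> space (predictable_sigma F \<Omega>). Y n p \<le> c}"
      obtain t \<omega> where p': "p = (t, \<omega>)" "0 \<le> t" "\<omega> \<in> \<Omega>" "Y n (t, \<omega>) \<le> c" using p sp by auto
      show "p \<in> ({0} \<times> {\<omega>\<in>\<Omega>. X 0 \<omega> \<le> c}) \<union> (\<Union>k. {real k / m<..real (Suc k) / m} \<times> {\<omega>\<in>\<Omega>. X (real k / m) \<omega> \<le> c})"
      proof (cases "t = 0")
        case True
        then show ?thesis using p' by (simp add: Y_def)
      next
        case False
        then have tp: "0 < t" using p' by auto
        obtain k where k: "real k / m < t" "t \<le> real (Suc k) / m" using ceil_grid[OF m tp] by blast
        have "Y n (t, \<omega>) = X (real k / m) \<omega>" using grid_val[OF m k] by (simp add: Y_def m_def)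
        then show ?thesis using p' k by auto
      qed
    next
      fix p assume p: "p \<in> ({0} \<times> {\<omega>\<in>\<Omega>. X 0 \<omega> \<le> c}) \<union> (\<Union>k. {real k / m<..real (Suc k) / m} \<times> {\<omega>\<in>\<Omega>. X (real k / m) \<omega> \<le> c})"
      then show "p \<in> {p \<in> space (predictable_sigma F \<Omega>). Y n p \<le> c}"
      proof
        assume "p \<in> {0} \<times> {\<omega>\<in>\<Omega>. X 0 \<omega> \<le> c}"
        then show ?thesis using sp by (auto simp: Y_def)
      next
        assume "p \<in> (\<Union>k. {real k / m<..real (Suc k) / m} \<times> {\<omega>\<in>\<Omega>. X (real k / m) \<omega> \<le> c})"
        then obtain k t \<omega> where k: "p = (t, \<omega>)" "real k / m < t" "t \<le> real (Suc k) / m" "\<omega> \<in> \<Omega>" "X (real k / m) \<omega> \<le> c"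
          by auto
        have "Y n (t, \<omega>) = X (real k / m) \<omega>" using grid_val[OF m k(2,3)] by (simp add: Y_def m_def)
        moreover have "0 \<le> t" using k(2) by (smt (verit) divide_nonneg_nonneg of_nat_0_le_iff)
        ultimately show ?thesis using k sp by auto
      qed
    qed
    have A: "{0} \<times> {\<omega>\<in>\<Omega>. X 0 \<omega> \<le> c} \<in> sigma_sets ({0..} \<times> \<Omega>) G"
      by (rule sigma_sets.Basic) (auto simp: G_def intro!: lev)
    have B: "{real k / m<..real (Suc k) / m} \<times> {\<omega>\<in>\<Omega>. X (real k / m) \<omega> \<le> c} \<in> sigma_sets ({0..} \<times> \<Omega>) G" for k
    proof (rule sigma_sets.Basic)
      have "0 \<le> real k / m" "real k / m \<le> real (Suc k) / m" using m by (auto simp: divide_right_mono)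
      then show "{real k / m<..real (Suc k) / m} \<times> {\<omega>\<in>\<Omega>. X (real k / m) \<omega> \<le> c} \<in> G"
        unfolding G_def using lev[of "real k / m" c] by blast
    qed
    show "{p \<in> space (predictable_sigma F \<Omega>). Y n p \<le> c} \<in> sets (predictable_sigma F \<Omega>)"
      unfolding eq sets using A B by (intro sigma_sets_Un sigma_sets.Union) auto
  qed
  have conv: "(\<lambda>n. Y n p) \<longlonglongrightarrow> (case p of (t, \<omega>) \<Rightarrow> X t \<omega>)" if p: "p \<in> space (predictable_sigma F \<Omega>)" for p
  proof -
    obtain t \<omega> where p': "p = (t, \<omega>)" "0 \<le> t" "\<omega> \<in> \<Omega>" using p sp by auto
    define r where "r n = max 0 ((of_int \<lceil>real (Suc n) * t\<rceil> - 1) / real (Suc n))" for n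
    have rb: "t - 1 / real (Suc n) \<le> r n \<and> r n \<le> t \<and> 0 \<le> r n" for n
    proof -
      have "of_int \<lceil>real (Suc n) * t\<rceil> - 1 \<le> real (Suc n) * t" "real (Suc n) * t \<le> of_int \<lceil>real (Suc n) * t\<rceil>"
        by (auto simp: ceiling_correct)
      then have "(of_int \<lceil>real (Suc n) * t\<rceil> - 1) / real (Suc n) \<le> t"
        "t - 1 / real (Suc n) \<le> (of_int \<lceil>real (Suc n) * t\<rceil> - 1) / real (Suc n)"
        by (auto simp: divide_simps mult.commute)
      then show ?thesis using p' by (auto simp: r_def)
    qed
    have lim1: "(\<lambda>n. t - 1 / real (Suc n)) \<longlonglongrightarrow> t"
      using tendsto_diff[OF tendsto_const[of t] LIMSEQ_inverse_real_of_nat] by (simp add: inverse_eq_divide)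
    have rt: "r \<longlonglongrightarrow> t"
      by (rule tendsto_sandwich[OF _ _ lim1 tendsto_const[of t]]) (use rb in auto)
    have "(\<lambda>n. X (r n) \<omega>) \<longlonglongrightarrow> X t \<omega>"
      by (rule continuous_on_tendsto_compose[OF cont[OF p'(3)] rt]) (use p' rb in auto)
    then show ?thesis using p' by (simp add: Y_def r_def)
  qed
  have "(\<lambda>p. case p of (t, \<omega>) \<Rightarrow> X t \<omega>) \<in> borel_measurable (predictable_sigma F \<Omega>)"
    by (rule borel_measurable_LIMSEQ_real[OF conv Ymeas])
  then show ?thesis unfolding predictable_def by simp
qed


definition Gf :: "(real \<Rightarrow> real) \<Rightarrow> real \<Rightarrow> real \<Rightarrow> real \<Rightarrow> real" where
  "Gf Xp a b r = max (min 0 (INF q\<in>\<rat>. b - Xp (clamp 0 r q)))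
     (SUP q\<in>\<rat>. min (a - Xp (clamp 0 r q)) (INF q'\<in>\<rat>. b - Xp (clamp (clamp 0 r q) r q')))"

lemma clamp_in2: "0 \<le> r \<Longrightarrow> 0 \<le> clamp (clamp 0 r q) r q' \<and> clamp (clamp 0 r q) r q' \<le> r"
  using clamp_in[of "clamp 0 r q" r q'] clamp_in[of 0 r q] by auto

lemma Gf_meas:
  fixes Xp :: "real \<Rightarrow> 'a \<Rightarrow> real"
  assumes r: "0 \<le> r"
    and meas: "\<And>u. 0 \<le> u \<Longrightarrow> u \<le> r \<Longrightarrow> Xp u \<in> borel_measurable M"
    and cont: "\<And>\<omega>. \<omega> \<in> space M \<Longrightarrow> continuous_on {0..r} (\<lambda>u. Xp u \<omega>)"
  shows "(\<lambda>\<omega>. Gf (\<lambda>u. Xp u \<omega>) a b r) \<in> borel_measurable M"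
proof -
  have m1: "(\<lambda>\<omega>. Xp (clamp 0 r q) \<omega>) \<in> borel_measurable M" for q
    using clamp_in[OF r, of q] by (intro meas) auto
  have m2: "(\<lambda>\<omega>. Xp (clamp (clamp 0 r q) r q') \<omega>) \<in> borel_measurable M" for q q'
    using clamp_in2[OF r] by (intro meas) auto
  have contb: "continuous_on {s..r} (\<lambda>u. b - Xp u \<omega>)" if "\<omega> \<in> space M" "0 \<le> s" for s \<omega>
    by (intro continuous_on_diff continuous_on_const continuous_on_subset[OF cont[OF that(1)]]) (use that in auto)
  have bdd1: "bdd_below ((\<lambda>q. b - Xp (clamp s r q) \<omega>) ` \<rat>)" if "\<omega> \<in> space M" "0 \<le> s" "s \<le> r" for s \<omega>
    using INFQ(2)[OF that(3) contb[OF that(1,2)]] .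
  have bdd2: "bdd_above ((\<lambda>q. min (a - Xp (clamp 0 r q) \<omega>) (INF q'\<in>\<rat>. b - Xp (clamp (clamp 0 r q) r q') \<omega>)) ` \<rat>)"
    if \<omega>: "\<omega> \<in> space M" for \<omega>
  proof -
    obtain B where B: "\<And>u. u \<in> {0..r} \<Longrightarrow> \<bar>Xp u \<omega>\<bar> \<le> B" using cont_bounded_Icc[OF cont[OF \<omega>]] by blast
    show ?thesis
    proof (rule bdd_aboveI[of _ "a + B"])
      fix x assume "x \<in> (\<lambda>q. min (a - Xp (clamp 0 r q) \<omega>) (INF q'\<in>\<rat>. b - Xp (clamp (clamp 0 r q) r q') \<omega>)) ` \<rat>"
      then obtain q where q: "x = min (a - Xp (clamp 0 r q) \<omega>) (INF q'\<in>\<rat>. b - Xp (clamp (clamp 0 r q) r q') \<omega>)" by auto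
      have "\<bar>Xp (clamp 0 r q) \<omega>\<bar> \<le> B" using B clamp_in[OF r, of q] by auto
      then show "x \<le> a + B" using q by auto
    qed
  qed
  show ?thesis
    unfolding Gf_def
    apply (intro borel_measurable_max borel_measurable_min borel_measurable_const borel_measurable_cINF
        borel_measurable_cSUP borel_measurable_diff countable_rat m1 m2)
    using bdd1[OF _ order_refl r] bdd2 bdd1 clamp_in[OF r] by auto
qed

context skor
begin

lemma Nform_Q:
  assumes t: "0 \<le> t"
  shows "L t - U t = Gf X a b t"
proof -
  have Ib_eq: "Ib s t = (INF q\<in>\<rat>. b - X (clamp s t q))" if "0 \<le> s" "s \<le> t" for s
    unfolding Ib_def using that
    by (intro INFQ(1)[symmetric]) (auto intro!: continuous_on_diff continuous_on_const sub_cont X_cont)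
  have "L t - U t = max (min 0 (Ib 0 t)) (SUP q\<in>\<rat>. min (a - X (clamp 0 t q)) (Ib (clamp 0 t q) t))"
    by (rule Nform[OF t])
  also have "\<dots> = Gf X a b t"
    unfolding Gf_def using Ib_eq clamp_in[OF t] t by (auto intro!: SUP_cong arg_cong2[where f=max] arg_cong2[where f=min])
  finally show ?thesis .
qed

end

lemma poi_transfer:
  fixes F G H :: "real \<Rightarrow> real"
  assumes eq: "\<And>t. 0 \<le> t \<Longrightarrow> ln (F t) = c + p * G t - q * H t"
    and pos: "\<And>t. 0 \<le> t \<Longrightarrow> 0 < F t" and p: "p > 0" and q: "q \<ge> 0" and H: "mono_on {0..} H"
    and t: "0 < t" and inc: "point_of_increase F t"
  shows "point_of_increase G t"
proof -
  from inc obtain d where d: "d > 0" "\<And>d1 d2. 0 < d1 \<Longrightarrow> d1 \<le> d \<Longrightarrow> 0 < d2 \<Longrightarrow> d2 \<le> d \<Longrightarrow> F (t - d1) < F (t + d2)"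
    unfolding point_of_increase_def by blast
  show ?thesis unfolding point_of_increase_def
  proof (intro exI[of _ "min d t"] conjI allI impI)
    show "0 < min d t" using d t by auto
    fix d1 d2 assume dd: "0 < d1 \<and> d1 \<le> min d t \<and> 0 < d2 \<and> d2 \<le> min d t"
    have le: "0 \<le> t - d1" "0 \<le> t + d2" using dd t by auto
    have "F (t - d1) < F (t + d2)" using d(2) dd by auto
    then have "ln (F (t - d1)) < ln (F (t + d2))" using pos le by simp
    then have "p * G (t - d1) - q * H (t - d1) < p * G (t + d2) - q * H (t + d2)" using eq le by simp
    moreover have "H (t - d1) \<le> H (t + d2)" using le dd by (intro mono_onD[OF H]) auto
    then have "q * H (t - d1) \<le> q * H (t + d2)" using q by (rule mult_left_mono)
    ultimately have "p * G (t - d1) < p * G (t + d2)" by linarith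
    then show "G (t - d1) < G (t + d2)" using p by simp
  qed
qed

lemma pod_transfer:
  fixes F G H :: "real \<Rightarrow> real"
  assumes eq: "\<And>t. 0 \<le> t \<Longrightarrow> ln (F t) = c + p * G t - q * H t"
    and pos: "\<And>t. 0 \<le> t \<Longrightarrow> 0 < F t" and p: "p \<ge> 0" and q: "q > 0" and G: "mono_on {0..} G"
    and t: "0 < t" and dec: "point_of_decrease F t"
  shows "point_of_increase H t"
proof -
  from dec obtain d where d: "d > 0" "\<And>d1 d2. 0 < d1 \<Longrightarrow> d1 \<le> d \<Longrightarrow> 0 < d2 \<Longrightarrow> d2 \<le> d \<Longrightarrow> F (t - d1) > F (t + d2)"
    unfolding point_of_decrease_def by blast
  show ?thesis unfolding point_of_increase_def
  proof (intro exI[of _ "min d t"] conjI allI impI)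
    show "0 < min d t" using d t by auto
    fix d1 d2 assume dd: "0 < d1 \<and> d1 \<le> min d t \<and> 0 < d2 \<and> d2 \<le> min d t"
    have le: "0 \<le> t - d1" "0 \<le> t + d2" using dd t by auto
    have "F (t - d1) > F (t + d2)" using d(2) dd by auto
    then have "ln (F (t - d1)) > ln (F (t + d2))" using pos le by simp
    then have "p * G (t - d1) - q * H (t - d1) > p * G (t + d2) - q * H (t + d2)" using eq le by simp
    moreover have "G (t - d1) \<le> G (t + d2)" using le dd by (intro mono_onD[OF G]) auto
    then have "p * G (t - d1) \<le> p * G (t + d2)" using p by (rule mult_left_mono)
    ultimately have "q * H (t - d1) < q * H (t + d2)" by linarith
    then show "H (t - d1) < H (t + d2)" using q by simp
  qed
qed

lemma bv_helper:
  fixes f G H :: "real \<Rightarrow> real"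
  assumes eq: "\<And>t. 0 \<le> t \<Longrightarrow> f t = c + p * G t - q * H t"
    and p: "p \<ge> 0" and q: "q \<ge> 0" and G: "mono_on {0..} G" and H: "mono_on {0..} H"
    and ab: "0 \<le> a" "a \<le> b"
  shows "bounded_variation_on f a b"
  unfolding bounded_variation_on_def
proof (intro exI[of _ "p * (G b - G a) + q * (H b - H a)"] allI impI)
  fix n :: nat and P :: "nat \<Rightarrow> real"
  assume P: "\<forall>i<n. a \<le> P i \<and> P i \<le> P (Suc i) \<and> P (Suc i) \<le> b"
  have Gm: "G u \<le> G v" if "0 \<le> u" "u \<le> v" for u v using that by (intro mono_onD[OF G]) auto
  have Hm: "H u \<le> H v" if "0 \<le> u" "u \<le> v" for u v using that by (intro mono_onD[OF H]) auto
  have step: "\<bar>f (P (Suc i)) - f (P i)\<bar> \<le> p * (G (P (Suc i)) - G (P i)) + q * (H (P (Suc i)) - H (P i))"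
    if i: "i < n" for i
  proof -
    have r: "0 \<le> P i" "P i \<le> P (Suc i)" using P i ab by auto
    have g: "0 \<le> p * (G (P (Suc i)) - G (P i))" using Gm[OF r] p by simp
    have h: "0 \<le> q * (H (P (Suc i)) - H (P i))" using Hm[OF r] q by simp
    have "f (P (Suc i)) - f (P i) = p * (G (P (Suc i)) - G (P i)) - q * (H (P (Suc i)) - H (P i))"
      using eq[of "P i"] eq[of "P (Suc i)"] r by (simp add: algebra_simps)
    then show ?thesis using g h by (simp add: abs_le_iff)
  qed
  have "(\<Sum>i<n. \<bar>f (P (Suc i)) - f (P i)\<bar>) \<le> (\<Sum>i<n. p * (G (P (Suc i)) - G (P i)) + q * (H (P (Suc i)) - H (P i)))"
    using step by (intro sum_mono) auto
  also have "\<dots> = p * (G (P n) - G (P 0)) + q * (H (P n) - H (P 0))"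
    using sum_lessThan_telescope[of "\<lambda>i. G (P i)" n] sum_lessThan_telescope[of "\<lambda>i. H (P i)" n]
    by (simp add: sum.distrib sum_distrib_left[symmetric])
  also have "\<dots> \<le> p * (G b - G a) + q * (H b - H a)"
  proof (cases n)
    case 0 then show ?thesis using Gm[OF ab] Hm[OF ab] p q by simp
  next
    case (Suc m)
    have a0: "a \<le> P 0" using P Suc by auto
    have bn: "P n \<le> b" using P[rule_format, of m] Suc by auto
    have mono: "P 0 \<le> P k" if "k \<le> n" for k
      using that
    proof (induction k)
      case 0 then show ?case by simp
    next
      case (Suc k)
      then have "P k \<le> P (Suc k)" using P by auto
      with Suc show ?case by auto
    qed
    have 0: "0 \<le> P 0" using a0 ab by auto
    have "G (P n) \<le> G b" "G a \<le> G (P 0)" "H (P n) \<le> H b" "H a \<le> H (P 0)"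
      using Gm[OF _ bn] Hm[OF _ bn] Gm[OF ab(1) a0] Hm[OF ab(1) a0] mono[of n] 0 by auto
    then have "G (P n) - G (P 0) \<le> G b - G a" "H (P n) - H (P 0) \<le> H b - H a" by auto
    then show ?thesis using p q
      by (intro add_mono mult_left_mono) auto
  qed
  finally show "(\<Sum>i<n. \<bar>f (P (Suc i)) - f (P i)\<bar>) \<le> p * (G b - G a) + q * (H b - H a)" .
qed


theorem mainTheorem3:
  fixes M :: "'a measure" and F :: "real \<Rightarrow> 'a measure"
    and w \<gamma> x0 y0 :: real
    and S x y P Z L U Ds Dp :: "real \<Rightarrow> 'a \<Rightarrow> real"
  assumes M: "prob_space M"
    and F: "filtration (space M) F" and F_sub: "\<And>t. sets (F t) \<subseteq> sets M"
    and w: "0 < w" "w < 1" and gamma: "0 < \<gamma>" "\<gamma> < 1"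
    and x0: "0 < x0" and y0: "0 < y0"
    \<comment> \<open>reference price: positive, continuous paths, adapted\<close>
    and S_pos: "\<And>t \<omega>. \<omega> \<in> space M \<Longrightarrow> 0 \<le> t \<Longrightarrow> 0 < S t \<omega>"
    and S_cont: "\<And>\<omega>. \<omega> \<in> space M \<Longrightarrow> continuous_on {0..} (\<lambda>t. S t \<omega>)"
    and S_adapted: "\<And>t. 0 \<le> t \<Longrightarrow> S t \<in> borel_measurable (F t)"
    \<comment> \<open>initial reserves and initial band condition, with P_0 = w/(1-w) y_0/x_0\<close>
    and init: "\<And>\<omega>. \<omega> \<in> space M \<Longrightarrow> x 0 \<omega> = x0 \<and> y 0 \<omega> = y0"
    and S0: "\<And>\<omega>. \<omega> \<in> space M \<Longrightarrow>
               \<gamma> * (w / (1 - w) * y0 / x0) \<le> S 0 \<omega> \<and> S 0 \<omega> \<le> (w / (1 - w) * y0 / x0) / \<gamma>"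
    \<comment> \<open>reserves positive, pool price\<close>
    and xy_pos: "\<And>t \<omega>. \<omega> \<in> space M \<Longrightarrow> 0 \<le> t \<Longrightarrow> 0 < x t \<omega> \<and> 0 < y t \<omega>"
    and P_def: "\<And>t \<omega>. \<omega> \<in> space M \<Longrightarrow> 0 \<le> t \<Longrightarrow> P t \<omega> = w / (1 - w) * y t \<omega> / x t \<omega>"
    \<comment> \<open>reserves change only through trades (no noise traders): Ds = cumulative increase of
        ln x through sales of X to the pool (rule gamma w dx/x + (1-w) dy/y = 0),
        Dp = cumulative decrease of ln x through purchases of X from the pool
        (rule w dx/x + gamma (1-w) dy/y = 0)\<close>
    and Ds_mono: "\<And>\<omega>. \<omega> \<in> space M \<Longrightarrow> mono_on {0..} (\<lambda>t. Ds t \<omega>)"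
    and Dp_mono: "\<And>\<omega>. \<omega> \<in> space M \<Longrightarrow> mono_on {0..} (\<lambda>t. Dp t \<omega>)"
    and D0: "\<And>\<omega>. \<omega> \<in> space M \<Longrightarrow> Ds 0 \<omega> = 0 \<and> Dp 0 \<omega> = 0"
    and lnx: "\<And>t \<omega>. \<omega> \<in> space M \<Longrightarrow> 0 \<le> t \<Longrightarrow>
               ln (x t \<omega>) = ln x0 + Ds t \<omega> - Dp t \<omega>"
    and lny: "\<And>t \<omega>. \<omega> \<in> space M \<Longrightarrow> 0 \<le> t \<Longrightarrow>
               ln (y t \<omega>) = ln y0 - \<gamma> * w / (1 - w) * Ds t \<omega> + w / (\<gamma> * (1 - w)) * Dp t \<omega>"
    \<comment> \<open>L = cumulative decrease of ln P due to (arbitrage) sales,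
        U = cumulative increase of ln P due to (arbitrage) purchases\<close>
    and L_def: "\<And>t \<omega>. \<omega> \<in> space M \<Longrightarrow> 0 \<le> t \<Longrightarrow>
               L t \<omega> = Ds t \<omega> + \<gamma> * w / (1 - w) * Ds t \<omega>"
    and U_def: "\<And>t \<omega>. \<omega> \<in> space M \<Longrightarrow> 0 \<le> t \<Longrightarrow>
               U t \<omega> = Dp t \<omega> + w / (\<gamma> * (1 - w)) * Dp t \<omega>"
    \<comment> \<open>continuous instantaneous arbitrage: Skorokhod reflection of Z in [ln gamma, - ln gamma]\<close>
    and Z_def: "\<And>t \<omega>. \<omega> \<in> space M \<Longrightarrow> 0 \<le> t \<Longrightarrow> Z t \<omega> = ln (S t \<omega> / P t \<omega>)"
    and LU_cont: "\<And>\<omega>. \<omega> \<in> space M \<Longrightarrow>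
               continuous_on {0..} (\<lambda>t. L t \<omega>) \<and> continuous_on {0..} (\<lambda>t. U t \<omega>)"
    and LU_mono: "\<And>\<omega>. \<omega> \<in> space M \<Longrightarrow>
               mono_on {0..} (\<lambda>t. L t \<omega>) \<and> mono_on {0..} (\<lambda>t. U t \<omega>)"
    and LU0: "\<And>\<omega>. \<omega> \<in> space M \<Longrightarrow> L 0 \<omega> = 0 \<and> U 0 \<omega> = 0"
    and Z_band: "\<And>t \<omega>. \<omega> \<in> space M \<Longrightarrow> 0 \<le> t \<Longrightarrow> ln \<gamma> \<le> Z t \<omega> \<and> Z t \<omega> \<le> - ln \<gamma>"
    and L_only: "\<And>\<omega>. \<omega> \<in> space M \<Longrightarrow> increases_only_when (\<lambda>t. L t \<omega>) (\<lambda>t. Z t \<omega>) (ln \<gamma>)"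
    and U_only: "\<And>\<omega>. \<omega> \<in> space M \<Longrightarrow> increases_only_when (\<lambda>t. U t \<omega>) (\<lambda>t. Z t \<omega>) (- ln \<gamma>)"
  shows
    \<comment> \<open>(a)\<close>
    "(predictable F (space M) x \<and> predictable F (space M) y) \<and>
     (\<forall>\<omega>\<in>space M.
        \<comment> \<open>(b)\<close>
        (increases_only_when (\<lambda>t. x t \<omega>) (\<lambda>t. Z t \<omega>) (ln \<gamma>) \<and>
         decreases_only_when (\<lambda>t. x t \<omega>) (\<lambda>t. Z t \<omega>) (- ln \<gamma>) \<and>
         increases_only_when (\<lambda>t. y t \<omega>) (\<lambda>t. Z t \<omega>) (- ln \<gamma>) \<and>
         decreases_only_when (\<lambda>t. y t \<omega>) (\<lambda>t. Z t \<omega>) (ln \<gamma>)) \<and>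
        \<comment> \<open>(c)\<close>
        (continuous_on {0..} (\<lambda>t. ln (x t \<omega>)) \<and> continuous_on {0..} (\<lambda>t. ln (y t \<omega>)) \<and>
         (\<forall>a b. 0 \<le> a \<longrightarrow> a \<le> b \<longrightarrow>
            bounded_variation_on (\<lambda>t. ln (x t \<omega>)) a b \<and>
            bounded_variation_on (\<lambda>t. ln (y t \<omega>)) a b)) \<and>
        \<comment> \<open>(d), in integrated form\<close>
        (\<forall>t\<ge>0.
           ln (x t \<omega>) = ln x0 + (1 - w) / (1 - w + \<gamma> * w) * L t \<omega>
                                - \<gamma> * (1 - w) / (\<gamma> * (1 - w) + w) * U t \<omega> \<and>
           ln (y t \<omega>) = ln y0 + w / (\<gamma> * (1 - w) + w) * U t \<omega>
                                - \<gamma> * w / (1 - w + \<gamma> * w) * L t \<omega>))"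
proof -
  interpret prob_space M by (rule M)
  define P0 where "P0 = w / (1 - w) * y0 / x0"
  define \<alpha> where "\<alpha> = (1 - w) / (1 - w + \<gamma> * w)"
  define \<beta> where "\<beta> = \<gamma> * (1 - w) / (\<gamma> * (1 - w) + w)"
  define Xf where "Xf t \<omega> = ln (S t \<omega>) - ln P0" for t \<omega>
  have w1: "0 < 1 - w" using w by simp
  have P0pos: "0 < P0" using w x0 y0 by (simp add: P0_def)
  have lnP0: "ln P0 = ln (w / (1 - w)) + ln y0 - ln x0"
    using w x0 y0 w1 by (simp add: P0_def ln_mult ln_div)
  have gw: "0 < \<gamma> * w" "0 < \<gamma> * (1 - w)" using w gamma w1 by auto
  have nz1: "0 < 1 - w + \<gamma> * w" "1 - w + \<gamma> * w \<noteq> 0" using w1 gw by linarith+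
  have nz2: "0 < \<gamma> * (1 - w) + w" "\<gamma> * (1 - w) + w \<noteq> 0" using w gw by linarith+
  have apos: "0 < \<alpha>" using w gamma w1 by (simp add: \<alpha>_def add_pos_pos)
  have bpos: "0 < \<beta>" using w gamma w1 by (simp add: \<beta>_def add_pos_pos)
  have w1ne: "1 - w \<noteq> 0" using w1 by simp
  have gne: "\<gamma> * (1 - w) \<noteq> 0" using gw by linarith
  have e1: "1 + \<gamma> * w / (1 - w) = (1 - w + \<gamma> * w) / (1 - w)"
    using w1ne by (simp add: add_divide_distrib)
  have a1: "\<alpha> * (1 + \<gamma> * w / (1 - w)) = 1"
    unfolding e1 \<alpha>_def using w1ne nz1 by simp
  have e2: "1 + w / (\<gamma> * (1 - w)) = (\<gamma> * (1 - w) + w) / (\<gamma> * (1 - w))"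
    using gne by (simp add: add_divide_distrib)
  have b1: "\<beta> * (1 + w / (\<gamma> * (1 - w))) = 1"
    unfolding e2 \<beta>_def using gne nz2 by simp
  have a2: "\<gamma> * w / (1 - w) * \<alpha> = \<gamma> * w / (1 - w + \<gamma> * w)"
    unfolding \<alpha>_def using w1ne by simp
  have b2: "w / (\<gamma> * (1 - w)) * \<beta> = w / (\<gamma> * (1 - w) + w)"
    unfolding \<beta>_def using gne by simp
  have Ds_eq: "Ds t \<omega> = \<alpha> * L t \<omega>" if "\<omega> \<in> space M" "0 \<le> t" for t \<omega>
  proof -
    have "\<alpha> * L t \<omega> = (\<alpha> * (1 + \<gamma> * w / (1 - w))) * Ds t \<omega>"
      using L_def[OF that] by (simp add: algebra_simps)
    then show ?thesis using a1 by simp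
  qed
  have Dp_eq: "Dp t \<omega> = \<beta> * U t \<omega>" if "\<omega> \<in> space M" "0 \<le> t" for t \<omega>
  proof -
    have "\<beta> * U t \<omega> = (\<beta> * (1 + w / (\<gamma> * (1 - w)))) * Dp t \<omega>"
      using U_def[OF that] by (simp add: algebra_simps)
    then show ?thesis using b1 by simp
  qed
  have lnx': "ln (x t \<omega>) = ln x0 + \<alpha> * L t \<omega> - \<beta> * U t \<omega>" if "\<omega> \<in> space M" "0 \<le> t" for t \<omega>
    using lnx[OF that] Ds_eq[OF that] Dp_eq[OF that] by simp
  have lny': "ln (y t \<omega>) = ln y0 + w / (\<gamma> * (1 - w) + w) * U t \<omega> - \<gamma> * w / (1 - w + \<gamma> * w) * L t \<omega>"
    if "\<omega> \<in> space M" "0 \<le> t" for t \<omega>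
  proof -
    have "ln (y t \<omega>) = ln y0 - (\<gamma> * w / (1 - w) * \<alpha>) * L t \<omega> + (w / (\<gamma> * (1 - w)) * \<beta>) * U t \<omega>"
      using lny[OF that] Ds_eq[OF that] Dp_eq[OF that] by simp
    then show ?thesis unfolding a2 b2 by simp
  qed
  have Zeq: "Z t \<omega> = Xf t \<omega> + L t \<omega> - U t \<omega>" if "\<omega> \<in> space M" "0 \<le> t" for t \<omega>
  proof -
    have xp: "0 < x t \<omega>" "0 < y t \<omega>" using xy_pos[OF that] by auto
    have Sp: "0 < S t \<omega>" using S_pos[OF that] .
    have Pp: "0 < P t \<omega>" using P_def[OF that] xp w w1 by simp
    have lnP: "ln (P t \<omega>) = ln (w / (1 - w)) + ln (y t \<omega>) - ln (x t \<omega>)"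
      using P_def[OF that] xp w w1 by (simp add: ln_mult ln_div)
    have lyx: "ln (y t \<omega>) - ln (x t \<omega>) = ln y0 - ln x0 - L t \<omega> + U t \<omega>"
      using lny[OF that] lnx[OF that] L_def[OF that] U_def[OF that] by simp
    have "Z t \<omega> = ln (S t \<omega>) - ln (P t \<omega>)" using Z_def[OF that] Sp Pp by (simp add: ln_div)
    then show ?thesis using lnP lyx lnP0 by (simp add: Xf_def)
  qed
  have lng: "ln \<gamma> < 0" using gamma by simp
  have sk: "skor (\<lambda>t. Xf t \<omega>) (\<lambda>t. L t \<omega>) (\<lambda>t. U t \<omega>) (ln \<gamma>) (- ln \<gamma>)" if \<omega>: "\<omega> \<in> space M" for \<omega>
  proof
    show "ln \<gamma> < - ln \<gamma>" using lng by simp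
    show "continuous_on {0..} (\<lambda>t. Xf t \<omega>)" unfolding Xf_def
      using S_cont[OF \<omega>] S_pos[OF \<omega>]
      by (intro continuous_on_diff continuous_on_const continuous_on_ln) (auto simp: less_imp_neq[symmetric] dest!: )
    show "continuous_on {0..} (\<lambda>t. L t \<omega>)" "continuous_on {0..} (\<lambda>t. U t \<omega>)" using LU_cont[OF \<omega>] by auto
    show "mono_on {0..} (\<lambda>t. L t \<omega>)" "mono_on {0..} (\<lambda>t. U t \<omega>)" using LU_mono[OF \<omega>] by auto
    show "L 0 \<omega> = 0" "U 0 \<omega> = 0" using LU0[OF \<omega>] by auto
    fix t
    show "0 \<le> t \<Longrightarrow> ln \<gamma> \<le> Xf t \<omega> + L t \<omega> - U t \<omega> \<and> Xf t \<omega> + L t \<omega> - U t \<omega> \<le> - ln \<gamma>"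
      using Z_band[OF \<omega>] Zeq[OF \<omega>] by metis
    show "0 < t \<Longrightarrow> point_of_increase (\<lambda>t. L t \<omega>) t \<Longrightarrow> Xf t \<omega> + L t \<omega> - U t \<omega> = ln \<gamma>"
      using L_only[OF \<omega>] Zeq[OF \<omega>, of t] unfolding increases_only_when_def by auto
    show "0 < t \<Longrightarrow> point_of_increase (\<lambda>t. U t \<omega>) t \<Longrightarrow> Xf t \<omega> + L t \<omega> - U t \<omega> = - ln \<gamma>"
      using U_only[OF \<omega>] Zeq[OF \<omega>, of t] unfolding increases_only_when_def by auto
  qed
  have spF: "\<And>t. space (F t) = space M" using F by (simp add: filtration.space_F)
  have sub: "f \<in> borel_measurable (F r)" if "0 \<le> u" "u \<le> r" "f \<in> borel_measurable (F u)" for f u r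
  proof (rule measurable_from_subalg[OF _ that(3)])
    show "subalgebra (F r) (F u)" unfolding subalgebra_def
      using filtration.sets_F_mono[OF F that(2)] spF by auto
  qed
  have Xf_meas: "Xf u \<in> borel_measurable (F u)" if "0 \<le> u" for u
    unfolding Xf_def[abs_def] by (intro borel_measurable_diff borel_measurable_ln borel_measurable_const S_adapted that)
  have N_meas: "(\<lambda>\<omega>. L r \<omega> - U r \<omega>) \<in> borel_measurable (F r)" if r: "0 \<le> r" for r
  proof -
    have "(\<lambda>\<omega>. Gf (\<lambda>u. Xf u \<omega>) (ln \<gamma>) (- ln \<gamma>) r) \<in> borel_measurable (F r)"
    proof (rule Gf_meas[OF r])
      fix u assume "0 \<le> u" "u \<le> r" then show "Xf u \<in> borel_measurable (F r)" using sub Xf_meas by blast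
    next
      fix \<omega> assume "\<omega> \<in> space (F r)"
      then have \<omega>: "\<omega> \<in> space M" using spF by simp
      show "continuous_on {0..r} (\<lambda>u. Xf u \<omega>)"
        by (rule continuous_on_subset[OF skor.X_cont[OF sk[OF \<omega>]]]) auto
    qed
    moreover have "\<And>\<omega>. \<omega> \<in> space (F r) \<Longrightarrow> L r \<omega> - U r \<omega> = Gf (\<lambda>u. Xf u \<omega>) (ln \<gamma>) (- ln \<gamma>) r"
      using skor.Nform_Q[OF sk r] spF by simp
    ultimately show ?thesis by (rule measurable_cong[THEN iffD2, rotated])
  qed
  have L_meas: "L t \<in> borel_measurable (F t)" if t: "0 \<le> t" for t
  proof (rule borel_measurable_LIMSEQ_real)
    fix \<omega> assume "\<omega> \<in> space (F t)"
    then have \<omega>: "\<omega> \<in> space M" using spF by simp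
    show "(\<lambda>n. \<Sum>i<n. max 0 ((L (t * real (Suc i) / real n) \<omega> - U (t * real (Suc i) / real n) \<omega>)
                 - (L (t * real i / real n) \<omega> - U (t * real i / real n) \<omega>))) \<longlonglongrightarrow> L t \<omega>"
      using skor.Lform[OF sk[OF \<omega>] t] .
  next
    fix n :: nat
    have gp: "0 \<le> t * real i / real n \<and> t * real i / real n \<le> t" if "i \<le> n" for i
      using that t by (cases "n = 0") (auto simp: divide_le_eq intro: mult_left_mono)
    have Nm: "(\<lambda>\<omega>. L (t * real i / real n) \<omega> - U (t * real i / real n) \<omega>) \<in> borel_measurable (F t)" if "i \<le> n" for i
      using gp[OF that] N_meas sub by blast
    show "(\<lambda>\<omega>. \<Sum>i<n. max 0 ((L (t * real (Suc i) / real n) \<omega> - U (t * real (Suc i) / real n) \<omega>)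
                 - (L (t * real i / real n) \<omega> - U (t * real i / real n) \<omega>))) \<in> borel_measurable (F t)"
      by (intro borel_measurable_sum borel_measurable_max borel_measurable_const borel_measurable_diff Nm) auto
  qed
  have U_meas: "U t \<in> borel_measurable (F t)" if t: "0 \<le> t" for t
  proof -
    have "(\<lambda>\<omega>. L t \<omega> - (L t \<omega> - U t \<omega>)) \<in> borel_measurable (F t)"
      by (rule borel_measurable_diff[OF L_meas[OF t] N_meas[OF t]])
    then show ?thesis by simp
  qed
  have x_exp: "x t \<omega> = exp (ln x0 + \<alpha> * L t \<omega> - \<beta> * U t \<omega>)" if "\<omega> \<in> space M" "0 \<le> t" for t \<omega>
    using lnx'[OF that] xy_pos[OF that] by (metis exp_ln)
  have y_exp: "y t \<omega> = exp (ln y0 + w / (\<gamma> * (1 - w) + w) * U t \<omega> - \<gamma> * w / (1 - w + \<gamma> * w) * L t \<omega>)"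
    if "\<omega> \<in> space M" "0 \<le> t" for t \<omega>
    using lny'[OF that] xy_pos[OF that] by (metis exp_ln)
  have predx: "predictable F (space M) x"
  proof (rule predictable_cont_adapted[OF F])
    fix \<omega> assume \<omega>: "\<omega> \<in> space M"
    have "continuous_on {0..} (\<lambda>t. exp (ln x0 + \<alpha> * L t \<omega> - \<beta> * U t \<omega>))"
      using LU_cont[OF \<omega>] by (intro continuous_intros) auto
    note hc = this
    show "continuous_on {0..} (\<lambda>t. x t \<omega>)" by (rule continuous_on_cong[THEN iffD1, OF refl _ hc]) (use x_exp[OF \<omega>] in auto)
  next
    fix t :: real assume t: "0 \<le> t"
    have "(\<lambda>\<omega>. exp (ln x0 + \<alpha> * L t \<omega> - \<beta> * U t \<omega>)) \<in> borel_measurable (F t)"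
      by (intro measurable_compose[OF _ borel_measurable_exp] borel_measurable_add borel_measurable_diff
          borel_measurable_times borel_measurable_const L_meas[OF t] U_meas[OF t])
    moreover have "\<And>\<omega>. \<omega> \<in> space (F t) \<Longrightarrow> x t \<omega> = exp (ln x0 + \<alpha> * L t \<omega> - \<beta> * U t \<omega>)"
      using x_exp[OF _ t] spF by simp
    ultimately show "x t \<in> borel_measurable (F t)" by (rule measurable_cong[THEN iffD2, rotated])
  qed
  have predy: "predictable F (space M) y"
  proof (rule predictable_cont_adapted[OF F])
    fix \<omega> assume \<omega>: "\<omega> \<in> space M"
    have "continuous_on {0..} (\<lambda>t. exp (ln y0 + w / (\<gamma> * (1 - w) + w) * U t \<omega> - \<gamma> * w / (1 - w + \<gamma> * w) * L t \<omega>))"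
      using LU_cont[OF \<omega>] by (intro continuous_intros) auto
    note hc = this
    show "continuous_on {0..} (\<lambda>t. y t \<omega>)" by (rule continuous_on_cong[THEN iffD1, OF refl _ hc]) (use y_exp[OF \<omega>] in auto)
  next
    fix t :: real assume t: "0 \<le> t"
    have "(\<lambda>\<omega>. exp (ln y0 + w / (\<gamma> * (1 - w) + w) * U t \<omega> - \<gamma> * w / (1 - w + \<gamma> * w) * L t \<omega>)) \<in> borel_measurable (F t)"
      by (intro measurable_compose[OF _ borel_measurable_exp] borel_measurable_add borel_measurable_diff
          borel_measurable_times borel_measurable_const L_meas[OF t] U_meas[OF t])
    moreover have "\<And>\<omega>. \<omega> \<in> space (F t) \<Longrightarrow> y t \<omega> = exp (ln y0 + w / (\<gamma> * (1 - w) + w) * U t \<omega> - \<gamma> * w / (1 - w + \<gamma> * w) * L t \<omega>)"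
      using y_exp[OF _ t] spF by simp
    ultimately show "y t \<in> borel_measurable (F t)" by (rule measurable_cong[THEN iffD2, rotated])
  qed
  have p1: "0 < w / (\<gamma> * (1 - w) + w)" using w gamma w1 by (simp add: add_pos_pos)
  have q1: "0 < \<gamma> * w / (1 - w + \<gamma> * w)" using w gamma w1 by (simp add: add_pos_pos)
  have per: "(increases_only_when (\<lambda>t. x t \<omega>) (\<lambda>t. Z t \<omega>) (ln \<gamma>) \<and>
         decreases_only_when (\<lambda>t. x t \<omega>) (\<lambda>t. Z t \<omega>) (- ln \<gamma>) \<and>
         increases_only_when (\<lambda>t. y t \<omega>) (\<lambda>t. Z t \<omega>) (- ln \<gamma>) \<and>
         decreases_only_when (\<lambda>t. y t \<omega>) (\<lambda>t. Z t \<omega>) (ln \<gamma>)) \<and>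
        (continuous_on {0..} (\<lambda>t. ln (x t \<omega>)) \<and> continuous_on {0..} (\<lambda>t. ln (y t \<omega>)) \<and>
         (\<forall>a b. 0 \<le> a \<longrightarrow> a \<le> b \<longrightarrow>
            bounded_variation_on (\<lambda>t. ln (x t \<omega>)) a b \<and>
            bounded_variation_on (\<lambda>t. ln (y t \<omega>)) a b)) \<and>
        (\<forall>t\<ge>0.
           ln (x t \<omega>) = ln x0 + (1 - w) / (1 - w + \<gamma> * w) * L t \<omega>
                                - \<gamma> * (1 - w) / (\<gamma> * (1 - w) + w) * U t \<omega> \<and>
           ln (y t \<omega>) = ln y0 + w / (\<gamma> * (1 - w) + w) * U t \<omega>
                                - \<gamma> * w / (1 - w + \<gamma> * w) * L t \<omega>)"
    if \<omega>: "\<omega> \<in> space M" for \<omega>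
  proof -
    have Lmo: "mono_on {0..} (\<lambda>t. L t \<omega>)" and Umo: "mono_on {0..} (\<lambda>t. U t \<omega>)" using LU_mono[OF \<omega>] by auto
    have ex: "\<And>t. 0 \<le> t \<Longrightarrow> ln (x t \<omega>) = ln x0 + \<alpha> * L t \<omega> - \<beta> * U t \<omega>" using lnx'[OF \<omega>] by blast
    have ey: "\<And>t. 0 \<le> t \<Longrightarrow> ln (y t \<omega>) = ln y0 + w / (\<gamma> * (1 - w) + w) * U t \<omega> - \<gamma> * w / (1 - w + \<gamma> * w) * L t \<omega>"
      using lny'[OF \<omega>] by blast
    have xpos: "\<And>t. 0 \<le> t \<Longrightarrow> 0 < x t \<omega>" and ypos: "\<And>t. 0 \<le> t \<Longrightarrow> 0 < y t \<omega>" using xy_pos[OF \<omega>] by auto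
    have b1: "increases_only_when (\<lambda>t. x t \<omega>) (\<lambda>t. Z t \<omega>) (ln \<gamma>)"
      unfolding increases_only_when_def
    proof (intro allI impI)
      fix t :: real assume t: "0 < t" and inc: "point_of_increase (\<lambda>t. x t \<omega>) t"
      have "point_of_increase (\<lambda>t. L t \<omega>) t"
        by (rule poi_transfer[where F="\<lambda>t. x t \<omega>" and H="\<lambda>t. U t \<omega>", OF ex xpos apos _ Umo t inc]) (use bpos in auto)
      then show "Z t \<omega> = ln \<gamma>" using L_only[OF \<omega>] t unfolding increases_only_when_def by auto
    qed
    have b2: "decreases_only_when (\<lambda>t. x t \<omega>) (\<lambda>t. Z t \<omega>) (- ln \<gamma>)"
      unfolding decreases_only_when_def
    proof (intro allI impI)
      fix t :: real assume t: "0 < t" and dec: "point_of_decrease (\<lambda>t. x t \<omega>) t"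
      have "point_of_increase (\<lambda>t. U t \<omega>) t"
        by (rule pod_transfer[where F="\<lambda>t. x t \<omega>" and G="\<lambda>t. L t \<omega>", OF ex xpos _ bpos Lmo t dec]) (use apos in auto)
      then show "Z t \<omega> = - ln \<gamma>" using U_only[OF \<omega>] t unfolding increases_only_when_def by auto
    qed
    have b3: "increases_only_when (\<lambda>t. y t \<omega>) (\<lambda>t. Z t \<omega>) (- ln \<gamma>)"
      unfolding increases_only_when_def
    proof (intro allI impI)
      fix t :: real assume t: "0 < t" and inc: "point_of_increase (\<lambda>t. y t \<omega>) t"
      have "point_of_increase (\<lambda>t. U t \<omega>) t"
        by (rule poi_transfer[where F="\<lambda>t. y t \<omega>" and H="\<lambda>t. L t \<omega>", OF ey ypos p1 _ Lmo t inc]) (use q1 in auto)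
      then show "Z t \<omega> = - ln \<gamma>" using U_only[OF \<omega>] t unfolding increases_only_when_def by auto
    qed
    have b4: "decreases_only_when (\<lambda>t. y t \<omega>) (\<lambda>t. Z t \<omega>) (ln \<gamma>)"
      unfolding decreases_only_when_def
    proof (intro allI impI)
      fix t :: real assume t: "0 < t" and dec: "point_of_decrease (\<lambda>t. y t \<omega>) t"
      have "point_of_increase (\<lambda>t. L t \<omega>) t"
        by (rule pod_transfer[where F="\<lambda>t. y t \<omega>" and G="\<lambda>t. U t \<omega>", OF ey ypos _ q1 Umo t dec]) (use p1 in auto)
      then show "Z t \<omega> = ln \<gamma>" using L_only[OF \<omega>] t unfolding increases_only_when_def by auto
    qed
    have c1: "continuous_on {0..} (\<lambda>t. ln (x t \<omega>))"
    proof -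
      have "continuous_on {0..} (\<lambda>t. ln x0 + \<alpha> * L t \<omega> - \<beta> * U t \<omega>)"
        using LU_cont[OF \<omega>] by (intro continuous_intros) auto
      note hc = this
      show ?thesis by (rule continuous_on_cong[THEN iffD1, OF refl _ hc]) (use ex in auto)
    qed
    have c2: "continuous_on {0..} (\<lambda>t. ln (y t \<omega>))"
    proof -
      have "continuous_on {0..} (\<lambda>t. ln y0 + w / (\<gamma> * (1 - w) + w) * U t \<omega> - \<gamma> * w / (1 - w + \<gamma> * w) * L t \<omega>)"
        using LU_cont[OF \<omega>] by (intro continuous_intros) auto
      note hc = this
      show ?thesis by (rule continuous_on_cong[THEN iffD1, OF refl _ hc]) (use ey in auto)
    qed
    have c3: "\<forall>a b. 0 \<le> a \<longrightarrow> a \<le> b \<longrightarrow>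
            bounded_variation_on (\<lambda>t. ln (x t \<omega>)) a b \<and> bounded_variation_on (\<lambda>t. ln (y t \<omega>)) a b"
    proof (intro allI impI conjI)
      fix a b :: real assume ab: "0 \<le> a" "a \<le> b"
      show "bounded_variation_on (\<lambda>t. ln (x t \<omega>)) a b"
        by (rule bv_helper[OF ex _ _ Lmo Umo ab]) (use apos bpos in auto)
      show "bounded_variation_on (\<lambda>t. ln (y t \<omega>)) a b"
        by (rule bv_helper[OF ey _ _ Umo Lmo ab]) (use p1 q1 in auto)
    qed
    have d: "\<forall>t\<ge>0.
           ln (x t \<omega>) = ln x0 + (1 - w) / (1 - w + \<gamma> * w) * L t \<omega>
                                - \<gamma> * (1 - w) / (\<gamma> * (1 - w) + w) * U t \<omega> \<and>
           ln (y t \<omega>) = ln y0 + w / (\<gamma> * (1 - w) + w) * U t \<omega>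
                                - \<gamma> * w / (1 - w + \<gamma> * w) * L t \<omega>"
      using ex ey by (simp add: \<alpha>_def \<beta>_def)
    show ?thesis using b1 b2 b3 b4 c1 c2 c3 d by blast
  qed
  show ?thesis using predx predy per by blast
qed

end
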